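(* Let $S$ and $T$ be monoids. Then the direct product $S\times T$ is weakly right coherent if and only if both $S$ and $T$ are weakly right coherent.
   Context: A monoid $M$ is weakly right coherent (WRC) if every finitely generated right ideal of $M$ is finitely presented as a right $M$-act. (It is known that a monoid is WRC if and only if it is both right ideal Howson and finitely right equated.) A semigroup $S$ is right ideal Howson (RIH) if the intersection of any two finitely generated right ideals of $S$ is finitely generated (a right ideal $I$ is finitely generated if $I=XS^1$ for some finite $X\subseteq I$, where $S^1$ is $S$ with an identity adjoined if $S$ has none, and $S^1=S$ otherwise). For $a\in S$, the right annihilator congruence is $\mathbf{r}_S(a)=\{(s,t)\in S\times S\mid as=at\}$; $S$ is finitely right equated (FRE) if $\mathbf{r}_S(a)$ is finitely generated as a right congruence for every $a\in S$. *)

theory Defs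
  imports "HOL-Algebra.Group"
begin

definition right_act :: "'a monoid \<Rightarrow> 'x set \<Rightarrow> ('x \<Rightarrow> 'a \<Rightarrow> 'x) \<Rightarrow> bool" where
  "right_act M A act \<longleftrightarrow>
     (\<forall>x\<in>A. \<forall>s\<in>carrier M. act x s \<in> A) \<and>
     (\<forall>x\<in>A. act x \<one>\<^bsub>M\<^esub> = x) \<and>
     (\<forall>x\<in>A. \<forall>s\<in>carrier M. \<forall>t\<in>carrier M. act (act x s) t = act x (s \<otimes>\<^bsub>M\<^esub> t))"

definition right_congruence :: "'a monoid \<Rightarrow> 'x set \<Rightarrow> ('x \<Rightarrow> 'a \<Rightarrow> 'x) \<Rightarrow> ('x \<times> 'x) set \<Rightarrow> bool" where
  "right_congruence M A act \<rho> \<longleftrightarrow>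
     equiv A \<rho> \<and> (\<forall>(x, y)\<in>\<rho>. \<forall>s\<in>carrier M. (act x s, act y s) \<in> \<rho>)"

definition gen_right_congruence :: "'a monoid \<Rightarrow> 'x set \<Rightarrow> ('x \<Rightarrow> 'a \<Rightarrow> 'x) \<Rightarrow> ('x \<times> 'x) set \<Rightarrow> ('x \<times> 'x) set" where
  "gen_right_congruence M A act H = \<Inter>{\<rho>. right_congruence M A act \<rho> \<and> H \<subseteq> \<rho>}"

definition fg_right_congruence :: "'a monoid \<Rightarrow> 'x set \<Rightarrow> ('x \<Rightarrow> 'a \<Rightarrow> 'x) \<Rightarrow> ('x \<times> 'x) set \<Rightarrow> bool" where
  "fg_right_congruence M A act \<rho> \<longleftrightarrow>
     right_congruence M A act \<rho> \<and>
     (\<exists>H. finite H \<and> H \<subseteq> A \<times> A \<and> \<rho> = gen_right_congruence M A act H)"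

definition free_act_carrier :: "'a monoid \<Rightarrow> nat \<Rightarrow> (nat \<times> 'a) set" where
  "free_act_carrier M n = {..<n} \<times> carrier M"

definition free_action :: "'a monoid \<Rightarrow> nat \<times> 'a \<Rightarrow> 'a \<Rightarrow> nat \<times> 'a" where
  "free_action M p t = (fst p, snd p \<otimes>\<^bsub>M\<^esub> t)"

definition act_hom :: "'a monoid \<Rightarrow> 'x set \<Rightarrow> ('x \<Rightarrow> 'a \<Rightarrow> 'x) \<Rightarrow> 'y set \<Rightarrow> ('y \<Rightarrow> 'a \<Rightarrow> 'y) \<Rightarrow> ('x \<Rightarrow> 'y) \<Rightarrow> bool" where
  "act_hom M A act B act' f \<longleftrightarrow>
     f \<in> A \<rightarrow> B \<and> (\<forall>x\<in>A. \<forall>s\<in>carrier M. f (act x s) = act' (f x) s)"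

text \<open>A right M-act is finitely presented if it is isomorphic to F/rho with F a finitely
  generated free right act and rho a finitely generated right congruence on F; equivalently
  (first isomorphism theorem) it is the image of a surjective act morphism from a finitely
  generated free act whose kernel is a finitely generated right congruence.\<close>
definition finitely_presented_act :: "'a monoid \<Rightarrow> 'x set \<Rightarrow> ('x \<Rightarrow> 'a \<Rightarrow> 'x) \<Rightarrow> bool" where
  "finitely_presented_act M A act \<longleftrightarrow>
     right_act M A act \<and>
     (\<exists>n f. act_hom M (free_act_carrier M n) (free_action M) A act f \<and>
            f ` free_act_carrier M n = A \<and>
            fg_right_congruence M (free_act_carrier M n) (free_action M)
              {(x, y). x \<in> free_act_carrier M n \<and> y \<in> free_act_carrier M n \<and> f x = f y})"

definition fg_right_ideal :: "'a monoid \<Rightarrow> 'a set \<Rightarrow> bool" where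
  "fg_right_ideal M I \<longleftrightarrow>
     (\<exists>X. finite X \<and> X \<subseteq> carrier M \<and> I = {x \<otimes>\<^bsub>M\<^esub> s | x s. x \<in> X \<and> s \<in> carrier M})"

definition weakly_right_coherent :: "'a monoid \<Rightarrow> bool" where
  "weakly_right_coherent M \<longleftrightarrow>
     (\<forall>I. fg_right_ideal M I \<longrightarrow> finitely_presented_act M I (\<lambda>x s. x \<otimes>\<^bsub>M\<^esub> s))"

end

theory Submission
  imports Defs
begin

lemma rc_refl: "right_congruence M A act \<rho> \<Longrightarrow> x \<in> A \<Longrightarrow> (x,x) \<in> \<rho>"
  unfolding right_congruence_def equiv_def refl_on_def by blast
lemma rc_sym: "right_congruence M A act \<rho> \<Longrightarrow> (x,y) \<in> \<rho> \<Longrightarrow> (y,x) \<in> \<rho>"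
  unfolding right_congruence_def equiv_def sym_def by blast
lemma rc_trans: "right_congruence M A act \<rho> \<Longrightarrow> (x,y) \<in> \<rho> \<Longrightarrow> (y,z) \<in> \<rho> \<Longrightarrow> (x,z) \<in> \<rho>"
  unfolding right_congruence_def equiv_def trans_def by blast
lemma rc_compat: "right_congruence M A act \<rho> \<Longrightarrow> (x,y) \<in> \<rho> \<Longrightarrow> s \<in> carrier M \<Longrightarrow> (act x s, act y s) \<in> \<rho>"
  unfolding right_congruence_def by blast
lemma rc_sub: "right_congruence M A act \<rho> \<Longrightarrow> (x,y) \<in> \<rho> \<Longrightarrow> x \<in> A \<and> y \<in> A"
  unfolding right_congruence_def equiv_def refl_on_def by blast

lemma rc_intro:
  assumes "\<rho> \<subseteq> A \<times> A" "\<And>x. x \<in> A \<Longrightarrow> (x,x) \<in> \<rho>" "\<And>x y. (x,y) \<in> \<rho> \<Longrightarrow> (y,x) \<in> \<rho>"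
    "\<And>x y z. (x,y) \<in> \<rho> \<Longrightarrow> (y,z) \<in> \<rho> \<Longrightarrow> (x,z) \<in> \<rho>"
    "\<And>x y s. (x,y) \<in> \<rho> \<Longrightarrow> s \<in> carrier M \<Longrightarrow> (act x s, act y s) \<in> \<rho>"
  shows "right_congruence M A act \<rho>"
  using assms unfolding right_congruence_def equiv_def refl_on_def sym_def trans_def by blast

lemma gen_rc:
  assumes cl: "\<forall>x\<in>A. \<forall>s\<in>carrier M. act x s \<in> A" and HA: "H \<subseteq> A \<times> A"
  shows "right_congruence M A act (gen_right_congruence M A act H)"
proof -
  have AA: "right_congruence M A act (A \<times> A)"
    using cl by (intro rc_intro) auto
  show ?thesis
  proof (rule rc_intro)
    show "gen_right_congruence M A act H \<subseteq> A \<times> A"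
      using AA HA unfolding gen_right_congruence_def by blast
  qed (unfold gen_right_congruence_def, (blast dest: rc_refl rc_sym rc_trans rc_compat)+)
qed

lemma gen_sub: "H \<subseteq> gen_right_congruence M A act H"
  unfolding gen_right_congruence_def by blast

lemma gen_least: "right_congruence M A act \<rho> \<Longrightarrow> H \<subseteq> \<rho> \<Longrightarrow> gen_right_congruence M A act H \<subseteq> \<rho>"
  unfolding gen_right_congruence_def by blast


definition kerset :: "'a monoid \<Rightarrow> nat \<Rightarrow> (nat \<times> 'a \<Rightarrow> 'x) \<Rightarrow> ((nat \<times> 'a) \<times> (nat \<times> 'a)) set" where
  "kerset M n f = {(x, y). x \<in> free_act_carrier M n \<and> y \<in> free_act_carrier M n \<and> f x = f y}"

lemma kerset_eq: "{(x, y). x \<in> free_act_carrier M n \<and> y \<in> free_act_carrier M n \<and> f x = f y} = kerset M n f"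
  by (simp add: kerset_def)

lemma fa_closed: "monoid M \<Longrightarrow> p \<in> free_act_carrier M n \<Longrightarrow> t \<in> carrier M \<Longrightarrow> free_action M p t \<in> free_act_carrier M n"
  unfolding free_act_carrier_def free_action_def by (auto simp: monoid.m_closed)

lemma fa_one: "monoid M \<Longrightarrow> s \<in> carrier M \<Longrightarrow> free_action M (i, \<one>\<^bsub>M\<^esub>) s = (i, s)"
  unfolding free_action_def by (simp add: monoid.l_one)

lemma fa_rone: "monoid M \<Longrightarrow> p \<in> free_act_carrier M n \<Longrightarrow> free_action M p \<one>\<^bsub>M\<^esub> = p"
  unfolding free_action_def free_act_carrier_def by (auto simp: monoid.r_one)

lemma fa_assoc: "monoid M \<Longrightarrow> p \<in> free_act_carrier M n \<Longrightarrow> s \<in> carrier M \<Longrightarrow> t \<in> carrier M \<Longrightarrow>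
   free_action M (free_action M p s) t = free_action M p (s \<otimes>\<^bsub>M\<^esub> t)"
  unfolding free_action_def free_act_carrier_def by (auto simp: monoid.m_assoc)

lemma ker_rc:
  assumes M: "monoid M" and hom: "act_hom M (free_act_carrier M n) (free_action M) A act f"
  shows "right_congruence M (free_act_carrier M n) (free_action M) (kerset M n f)"
  using hom fa_closed[OF M] unfolding act_hom_def kerset_def
  by (intro rc_intro) auto

lemma indep:
  assumes M: "monoid M"
    and g: "act_hom M (free_act_carrier M m) (free_action M) A act g" "g ` free_act_carrier M m = A"
       "fg_right_congruence M (free_act_carrier M m) (free_action M) (kerset M m g)"
    and f: "act_hom M (free_act_carrier M n) (free_action M) A act f" "f ` free_act_carrier M n = A"
  shows "fg_right_congruence M (free_act_carrier M n) (free_action M) (kerset M n f)"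
proof -
  let ?Fm = "free_act_carrier M m" and ?Fn = "free_act_carrier M n" and ?fa = "free_action M"
  obtain H where H: "finite H" "H \<subseteq> ?Fm \<times> ?Fm" "kerset M m g = gen_right_congruence M ?Fm ?fa H"
    using g(3) unfolding fg_right_congruence_def by blast
  have one: "\<one>\<^bsub>M\<^esub> \<in> carrier M" using M by (simp add: monoid.one_closed)
  have "\<forall>i. \<exists>u. i < n \<longrightarrow> u \<in> ?Fm \<and> g u = f (i, \<one>\<^bsub>M\<^esub>)"
  proof (intro allI impI)
    fix i
    show "\<exists>u. i < n \<longrightarrow> u \<in> ?Fm \<and> g u = f (i, \<one>\<^bsub>M\<^esub>)"
    proof (cases "i < n")
      case True
      then have "(i, \<one>\<^bsub>M\<^esub>) \<in> ?Fn" using one unfolding free_act_carrier_def by auto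
      then have "f (i, \<one>\<^bsub>M\<^esub>) \<in> g ` ?Fm" using f(2) g(2) by blast
      then show ?thesis by (metis imageE)
    qed auto
  qed
  then obtain u where u: "\<And>i. i < n \<Longrightarrow> u i \<in> ?Fm \<and> g (u i) = f (i, \<one>\<^bsub>M\<^esub>)" by metis
  have "\<forall>i. \<exists>v. i < m \<longrightarrow> v \<in> ?Fn \<and> f v = g (i, \<one>\<^bsub>M\<^esub>)"
  proof (intro allI impI)
    fix i
    show "\<exists>v. i < m \<longrightarrow> v \<in> ?Fn \<and> f v = g (i, \<one>\<^bsub>M\<^esub>)"
    proof (cases "i < m")
      case True
      then have "(i, \<one>\<^bsub>M\<^esub>) \<in> ?Fm" using one unfolding free_act_carrier_def by auto
      then have "g (i, \<one>\<^bsub>M\<^esub>) \<in> f ` ?Fn" using f(2) g(2) by blast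
      then show ?thesis by (metis imageE)
    qed auto
  qed
  then obtain v where v: "\<And>i. i < m \<Longrightarrow> v i \<in> ?Fn \<and> f (v i) = g (i, \<one>\<^bsub>M\<^esub>)" by metis
  define \<alpha> where "\<alpha> p = ?fa (u (fst p)) (snd p)" for p
  define \<beta> where "\<beta> p = ?fa (v (fst p)) (snd p)" for p
  have \<alpha>F: "\<alpha> p \<in> ?Fm" if "p \<in> ?Fn" for p
    using that u fa_closed[OF M, of "u (fst p)" m "snd p"] unfolding \<alpha>_def
    by (auto simp: free_act_carrier_def)
  have \<beta>F: "\<beta> p \<in> ?Fn" if "p \<in> ?Fm" for p
    using that v fa_closed[OF M, of "v (fst p)" n "snd p"] unfolding \<beta>_def
    by (auto simp: free_act_carrier_def)
  have g\<alpha>: "g (\<alpha> p) = f p" if pF: "p \<in> ?Fn" for p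
  proof -
    obtain i s where p: "p = (i,s)" "i < n" "s \<in> carrier M" using pF by (cases p) (auto simp: free_act_carrier_def)
    have "g (\<alpha> p) = act (g (u i)) s" using g(1) u[OF p(2)] p unfolding act_hom_def \<alpha>_def by auto
    also have "\<dots> = act (f (i, \<one>\<^bsub>M\<^esub>)) s" using u[OF p(2)] by simp
    also have "\<dots> = f (?fa (i, \<one>\<^bsub>M\<^esub>) s)" using f(1) p one unfolding act_hom_def free_act_carrier_def by auto
    also have "\<dots> = f p" using fa_one[OF M p(3)] p by simp
    finally show ?thesis .
  qed
  have f\<beta>: "f (\<beta> p) = g p" if pF: "p \<in> ?Fm" for p
  proof -
    obtain i s where p: "p = (i,s)" "i < m" "s \<in> carrier M" using pF by (cases p) (auto simp: free_act_carrier_def)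
    have "f (\<beta> p) = act (f (v i)) s" using f(1) v[OF p(2)] p unfolding act_hom_def \<beta>_def by auto
    also have "\<dots> = act (g (i, \<one>\<^bsub>M\<^esub>)) s" using v[OF p(2)] by simp
    also have "\<dots> = g (?fa (i, \<one>\<^bsub>M\<^esub>) s)" using g(1) p one unfolding act_hom_def free_act_carrier_def by auto
    also have "\<dots> = g p" using fa_one[OF M p(3)] p by simp
    finally show ?thesis .
  qed
  have \<beta>hom: "\<beta> (?fa p t) = ?fa (\<beta> p) t" if pF: "p \<in> ?Fm" and tM: "t \<in> carrier M" for p t
  proof -
    obtain i s where p: "p = (i,s)" "i < m" "s \<in> carrier M" using pF by (cases p) (auto simp: free_act_carrier_def)
    show ?thesis using fa_assoc[OF M _ p(3) tM, of "v i" n] v[OF p(2)] p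
      unfolding \<beta>_def by (simp add: free_action_def)
  qed
  define H' where "H' = (\<lambda>(p,q). (\<beta> p, \<beta> q)) ` H \<union> (\<lambda>i. ((i, \<one>\<^bsub>M\<^esub>), \<beta> (\<alpha> (i, \<one>\<^bsub>M\<^esub>)))) ` {..<n}"
  have H'fin: "finite H'" unfolding H'_def using H(1) by auto
  have H'F: "H' \<subseteq> ?Fn \<times> ?Fn"
  proof -
    have i1: "(i, \<one>\<^bsub>M\<^esub>) \<in> ?Fn" if "i < n" for i using that one unfolding free_act_carrier_def by auto
    have "(\<lambda>i. ((i, \<one>\<^bsub>M\<^esub>), \<beta> (\<alpha> (i, \<one>\<^bsub>M\<^esub>)))) ` {..<n} \<subseteq> ?Fn \<times> ?Fn"
    proof (rule image_subsetI)
      fix i assume "i \<in> {..<n}"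
      then have "(i, \<one>\<^bsub>M\<^esub>) \<in> ?Fn" using i1 by simp
      then show "((i, \<one>\<^bsub>M\<^esub>), \<beta> (\<alpha> (i, \<one>\<^bsub>M\<^esub>))) \<in> ?Fn \<times> ?Fn"
        using \<alpha>F \<beta>F by simp
    qed
    moreover have "(\<lambda>(p,q). (\<beta> p, \<beta> q)) ` H \<subseteq> ?Fn \<times> ?Fn"
    proof (rule image_subsetI)
      fix x assume x: "x \<in> H"
      then obtain p q where pq: "x = (p,q)" by (cases x)
      then have "p \<in> ?Fm" "q \<in> ?Fm" using x H(2) by auto
      then show "(\<lambda>(p,q). (\<beta> p, \<beta> q)) x \<in> ?Fn \<times> ?Fn" using pq \<beta>F by simp
    qed
    ultimately show ?thesis unfolding H'_def by (rule Un_least[rotated])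
  qed
  let ?G = "gen_right_congruence M ?Fn ?fa H'"
  have Grc: "right_congruence M ?Fn ?fa ?G"
    by (rule gen_rc[OF _ H'F]) (use fa_closed[OF M] in blast)
  have kerrc: "right_congruence M ?Fn ?fa (kerset M n f)" by (rule ker_rc[OF M f(1)])
  have Hker: "H \<subseteq> kerset M m g" using H(3) gen_sub by metis
  have eq: "kerset M n f = ?G"
  proof
    show "?G \<subseteq> kerset M n f"
    proof (rule gen_least[OF kerrc])
      show "H' \<subseteq> kerset M n f"
      proof
        fix x assume "x \<in> H'"
        then consider (a) p q where "(p,q) \<in> H" "x = (\<beta> p, \<beta> q)"
          | (b) i where "i < n" "x = ((i, \<one>\<^bsub>M\<^esub>), \<beta> (\<alpha> (i, \<one>\<^bsub>M\<^esub>)))"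
          unfolding H'_def by auto
        then show "x \<in> kerset M n f"
        proof cases
          case a
          then have "p \<in> ?Fm" "q \<in> ?Fm" "g p = g q" using Hker unfolding kerset_def by auto
          then show ?thesis using a \<beta>F f\<beta> unfolding kerset_def by auto
        next
          case b
          then have i1: "(i, \<one>\<^bsub>M\<^esub>) \<in> ?Fn" using one unfolding free_act_carrier_def by auto
          then show ?thesis using b \<beta>F \<alpha>F f\<beta> g\<alpha> unfolding kerset_def by auto
        qed
      qed
    qed
  next
    show "kerset M n f \<subseteq> ?G"
    proof
      fix x assume x: "x \<in> kerset M n f"
      then obtain a b where ab: "x = (a,b)" "a \<in> ?Fn" "b \<in> ?Fn" "f a = f b" unfolding kerset_def by auto
      define R where "R = {(p,q). p \<in> ?Fm \<and> q \<in> ?Fm \<and> (\<beta> p, \<beta> q) \<in> ?G}"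
      have Rrc: "right_congruence M ?Fm ?fa R"
      proof (rule rc_intro)
        show "R \<subseteq> ?Fm \<times> ?Fm" unfolding R_def by auto
      next
        fix p assume "p \<in> ?Fm" then show "(p,p) \<in> R" unfolding R_def using rc_refl[OF Grc] \<beta>F by blast
      next
        fix p q assume "(p,q) \<in> R" then show "(q,p) \<in> R" unfolding R_def using rc_sym[OF Grc] by blast
      next
        fix p q r assume "(p,q) \<in> R" "(q,r) \<in> R" then show "(p,r) \<in> R" unfolding R_def using rc_trans[OF Grc] by blast
      next
        fix p q t assume pq: "(p,q) \<in> R" and t: "t \<in> carrier M"
        then have pF: "p \<in> ?Fm" and qF: "q \<in> ?Fm" and G: "(\<beta> p, \<beta> q) \<in> ?G" unfolding R_def by auto
        have "(?fa (\<beta> p) t, ?fa (\<beta> q) t) \<in> ?G" by (rule rc_compat[OF Grc G t])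
        then have "(\<beta> (?fa p t), \<beta> (?fa q t)) \<in> ?G" using \<beta>hom[OF pF t] \<beta>hom[OF qF t] by simp
        then show "(?fa p t, ?fa q t) \<in> R" unfolding R_def using fa_closed[OF M pF t] fa_closed[OF M qF t] by blast
      qed
      have HR: "H \<subseteq> R"
      proof
        fix y assume y: "y \<in> H"
        then obtain p q where "y = (p,q)" by (cases y) auto
        moreover have "(\<beta> p, \<beta> q) \<in> ?G" using y calculation gen_sub[of H'] unfolding H'_def by blast
        ultimately show "y \<in> R" using y H(2) unfolding R_def by auto
      qed
      have "(\<alpha> a, \<alpha> b) \<in> kerset M m g" using ab \<alpha>F g\<alpha> unfolding kerset_def by auto
      then have "(\<alpha> a, \<alpha> b) \<in> R" using gen_least[OF Rrc HR] H(3) by auto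
      then have mid: "(\<beta> (\<alpha> a), \<beta> (\<alpha> b)) \<in> ?G" unfolding R_def by auto
      have side: "(c, \<beta> (\<alpha> c)) \<in> ?G" if c: "c \<in> ?Fn" for c
      proof -
        obtain i s where cc: "c = (i,s)" "i < n" "s \<in> carrier M" using c by (cases c) (auto simp: free_act_carrier_def)
        have gi: "((i, \<one>\<^bsub>M\<^esub>), \<beta> (\<alpha> (i, \<one>\<^bsub>M\<^esub>))) \<in> ?G" using cc gen_sub[of H'] unfolding H'_def by blast
        have "(?fa (i, \<one>\<^bsub>M\<^esub>) s, ?fa (\<beta> (\<alpha> (i, \<one>\<^bsub>M\<^esub>))) s) \<in> ?G"
          by (rule rc_compat[OF Grc gi cc(3)])
        moreover have "?fa (i, \<one>\<^bsub>M\<^esub>) s = c" using fa_one[OF M cc(3)] cc by simp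
        moreover have "\<alpha> (i, \<one>\<^bsub>M\<^esub>) = u i" unfolding \<alpha>_def using fa_rone[OF M, of "u i" m] u[OF cc(2)] by simp
        moreover have "\<alpha> c = ?fa (u i) s" unfolding \<alpha>_def cc by simp
        moreover have "\<beta> (?fa (u i) s) = ?fa (\<beta> (u i)) s" using \<beta>hom u[OF cc(2)] cc(3) by auto
        ultimately show ?thesis by simp
      qed
      have "(a, b) \<in> ?G"
        using rc_trans[OF Grc rc_trans[OF Grc side[OF ab(2)] mid] rc_sym[OF Grc side[OF ab(3)]]] .
      then show "x \<in> ?G" using ab by simp
    qed
  qed
  show ?thesis unfolding fg_right_congruence_def
    by (intro conjI kerrc exI[of _ H']) (simp_all only: H'fin H'F eq)
qed

definition piof :: "'a monoid \<Rightarrow> (nat \<Rightarrow> 'a) \<Rightarrow> nat \<times> 'a \<Rightarrow> 'a" where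
  "piof M x p = x (fst p) \<otimes>\<^bsub>M\<^esub> snd p"

definition idl :: "'a monoid \<Rightarrow> nat \<Rightarrow> (nat \<Rightarrow> 'a) \<Rightarrow> 'a set" where
  "idl M n x = {x i \<otimes>\<^bsub>M\<^esub> s | i s. i < n \<and> s \<in> carrier M}"

definition KP :: "'a monoid \<Rightarrow> bool" where
  "KP M \<longleftrightarrow> (\<forall>n x. (\<forall>i<n. x i \<in> carrier M) \<longrightarrow>
      fg_right_congruence M (free_act_carrier M n) (free_action M) (kerset M n (piof M x)))"

lemma idl_image: "piof M x ` free_act_carrier M n = idl M n x"
  unfolding piof_def idl_def free_act_carrier_def by force

lemma idl_hom:
  assumes M: "monoid M" and x: "\<forall>i<n. x i \<in> carrier M"
  shows "act_hom M (free_act_carrier M n) (free_action M) (idl M n x) (\<lambda>a s. a \<otimes>\<^bsub>M\<^esub> s) (piof M x)"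
  unfolding act_hom_def
proof (intro conjI ballI)
  show "piof M x \<in> free_act_carrier M n \<rightarrow> idl M n x" by (simp add: image_subset_iff_funcset[symmetric] idl_image)
next
  fix p s assume p: "p \<in> free_act_carrier M n" and s: "s \<in> carrier M"
  obtain i t where it: "p = (i,t)" "i < n" "t \<in> carrier M"
    using p by (cases p) (auto simp: free_act_carrier_def)
  have "x i \<otimes>\<^bsub>M\<^esub> t \<otimes>\<^bsub>M\<^esub> s = x i \<otimes>\<^bsub>M\<^esub> (t \<otimes>\<^bsub>M\<^esub> s)"
    using x it s by (simp add: monoid.m_assoc[OF M])
  then show "piof M x (free_action M p s) = piof M x p \<otimes>\<^bsub>M\<^esub> s"
    unfolding piof_def free_action_def it by simp
qed

lemma idl_act:
  assumes M: "monoid M" and x: "\<forall>i<n. x i \<in> carrier M"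
  shows "right_act M (idl M n x) (\<lambda>a s. a \<otimes>\<^bsub>M\<^esub> s)"
  unfolding right_act_def
proof (intro conjI ballI)
  fix a s assume a: "a \<in> idl M n x" and s: "s \<in> carrier M"
  then obtain i t where it: "i < n" "t \<in> carrier M" "a = x i \<otimes>\<^bsub>M\<^esub> t" unfolding idl_def by auto
  then have "a \<otimes>\<^bsub>M\<^esub> s = x i \<otimes>\<^bsub>M\<^esub> (t \<otimes>\<^bsub>M\<^esub> s)" using x s by (simp add: monoid.m_assoc[OF M])
  moreover have "t \<otimes>\<^bsub>M\<^esub> s \<in> carrier M" using it(2) s by (rule monoid.m_closed[OF M])
  ultimately show "a \<otimes>\<^bsub>M\<^esub> s \<in> idl M n x" using it unfolding idl_def by blast
next
  fix a assume a: "a \<in> idl M n x"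
  then obtain i t where it: "i < n" "t \<in> carrier M" "a = x i \<otimes>\<^bsub>M\<^esub> t" unfolding idl_def by auto
  then have "a \<in> carrier M" using x by (simp add: monoid.m_closed[OF M])
  then show "a \<otimes>\<^bsub>M\<^esub> \<one>\<^bsub>M\<^esub> = a" by (simp add: monoid.r_one[OF M])
next
  fix a s t assume a: "a \<in> idl M n x" and s: "s \<in> carrier M" and t: "t \<in> carrier M"
  then obtain i r where it: "i < n" "r \<in> carrier M" "a = x i \<otimes>\<^bsub>M\<^esub> r" unfolding idl_def by auto
  then have "a \<in> carrier M" using x by (simp add: monoid.m_closed[OF M])
  then show "a \<otimes>\<^bsub>M\<^esub> s \<otimes>\<^bsub>M\<^esub> t = a \<otimes>\<^bsub>M\<^esub> (s \<otimes>\<^bsub>M\<^esub> t)" using s t by (simp add: monoid.m_assoc[OF M])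
qed

lemma fg_idl:
  assumes "fg_right_ideal M I"
  shows "\<exists>n x. (\<forall>i<n. x i \<in> carrier M) \<and> I = idl M n x"
proof -
  obtain X where X: "finite X" "X \<subseteq> carrier M" "I = {x \<otimes>\<^bsub>M\<^esub> s | x s. x \<in> X \<and> s \<in> carrier M}"
    using assms unfolding fg_right_ideal_def by blast
  obtain xs where xs: "set xs = X" using finite_list[OF X(1)] by blast
  have "\<forall>i<length xs. xs ! i \<in> carrier M" using xs X(2) by auto
  moreover have "I = idl M (length xs) (\<lambda>i. xs ! i)"
    unfolding X(3) idl_def using xs by (auto simp: in_set_conv_nth; blast)
  ultimately show ?thesis by blast
qed

lemma idl_fg:
  assumes "\<forall>i<n. x i \<in> carrier M"
  shows "fg_right_ideal M (idl M n x)"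
  unfolding fg_right_ideal_def
proof (rule exI[of _ "x ` {..<n}"], intro conjI)
  show "x ` {..<n} \<subseteq> carrier M" using assms by auto
  show "idl M n x = {xa \<otimes>\<^bsub>M\<^esub> s |xa s. xa \<in> x ` {..<n} \<and> s \<in> carrier M}"
    unfolding idl_def by blast
qed simp

lemma wrc_iff_KP:
  assumes M: "monoid M"
  shows "weakly_right_coherent M \<longleftrightarrow> KP M"
proof
  assume W: "weakly_right_coherent M"
  show "KP M" unfolding KP_def
  proof (intro allI impI)
    fix n :: nat and x assume x: "\<forall>i<n. x i \<in> carrier M"
    have "finitely_presented_act M (idl M n x) (\<lambda>a s. a \<otimes>\<^bsub>M\<^esub> s)"
      using W idl_fg[OF x] unfolding weakly_right_coherent_def by blast
    then obtain m g where g: "act_hom M (free_act_carrier M m) (free_action M) (idl M n x) (\<lambda>a s. a \<otimes>\<^bsub>M\<^esub> s) g"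
      "g ` free_act_carrier M m = idl M n x"
      "fg_right_congruence M (free_act_carrier M m) (free_action M) (kerset M m g)"
      unfolding finitely_presented_act_def kerset_eq by (elim conjE exE) (rule that, assumption+)
    show "fg_right_congruence M (free_act_carrier M n) (free_action M) (kerset M n (piof M x))"
      by (rule indep[OF M g idl_hom[OF M x] idl_image])
  qed
next
  assume K: "KP M"
  show "weakly_right_coherent M" unfolding weakly_right_coherent_def
  proof (intro allI impI)
    fix I assume "fg_right_ideal M I"
    then obtain n x where x: "\<forall>i<n. x i \<in> carrier M" and I: "I = idl M n x" using fg_idl by blast
    have "fg_right_congruence M (free_act_carrier M n) (free_action M) (kerset M n (piof M x))"
      using K x unfolding KP_def by blast
    then show "finitely_presented_act M I (\<lambda>a s. a \<otimes>\<^bsub>M\<^esub> s)"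
      unfolding finitely_presented_act_def I kerset_def
      by (intro conjI idl_act[OF M x] exI[of _ n] exI[of _ "piof M x"] idl_hom[OF M x] idl_image)
  qed
qed

lemma KP_D: "KP M \<Longrightarrow> \<forall>i<n. x i \<in> carrier M \<Longrightarrow>
      fg_right_congruence M (free_act_carrier M n) (free_action M) (kerset M n (piof M x))"
  unfolding KP_def by blast

lemma fgE:
  assumes "fg_right_congruence M A act \<rho>"
  obtains H where "finite H" "H \<subseteq> A \<times> A" "\<rho> = gen_right_congruence M A act H"
  using assms unfolding fg_right_congruence_def by blast

definition pid :: "'a monoid \<Rightarrow> 'a \<Rightarrow> 'a set" where
  "pid M a = (\<lambda>s. a \<otimes>\<^bsub>M\<^esub> s) ` carrier M"

definition setM :: "'a monoid \<Rightarrow> 'a set \<Rightarrow> 'a set" where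
  "setM M C = {c \<otimes>\<^bsub>M\<^esub> m | c m. c \<in> C \<and> m \<in> carrier M}"

definition RIHp :: "'a monoid \<Rightarrow> bool" where
  "RIHp M \<longleftrightarrow> (\<forall>a\<in>carrier M. \<forall>b\<in>carrier M. \<exists>C. finite C \<and> C \<subseteq> carrier M \<and> pid M a \<inter> pid M b = setM M C)"

definition ann :: "'a monoid \<Rightarrow> 'a \<Rightarrow> ('a \<times> 'a) set" where
  "ann M a = {(s,t). s \<in> carrier M \<and> t \<in> carrier M \<and> a \<otimes>\<^bsub>M\<^esub> s = a \<otimes>\<^bsub>M\<^esub> t}"

definition FREp :: "'a monoid \<Rightarrow> bool" where
  "FREp M \<longleftrightarrow> (\<forall>a\<in>carrier M. \<exists>H. finite H \<and> H \<subseteq> carrier M \<times> carrier M \<and>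
      ann M a = gen_right_congruence M (carrier M) (\<lambda>x s. x \<otimes>\<^bsub>M\<^esub> s) H)"

lemma piof_fa:
  assumes M: "monoid M" and x: "\<forall>i<n. x i \<in> carrier M" and p: "p \<in> free_act_carrier M n" and t: "t \<in> carrier M"
  shows "piof M x (free_action M p t) = piof M x p \<otimes>\<^bsub>M\<^esub> t"
  using idl_hom[OF M x] p t unfolding act_hom_def by blast

lemma piof_closed:
  assumes M: "monoid M" and x: "\<forall>i<n. x i \<in> carrier M" and p: "p \<in> free_act_carrier M n"
  shows "piof M x p \<in> carrier M"
  using p x unfolding piof_def free_act_carrier_def by (auto intro: monoid.m_closed[OF M])

lemma pid_mult:
  assumes M: "monoid M" and a: "a \<in> carrier M" and y: "y \<in> pid M a" and t: "t \<in> carrier M"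
  shows "y \<otimes>\<^bsub>M\<^esub> t \<in> pid M a"
proof -
  obtain s where s: "s \<in> carrier M" "y = a \<otimes>\<^bsub>M\<^esub> s" using y unfolding pid_def by auto
  then have "y \<otimes>\<^bsub>M\<^esub> t = a \<otimes>\<^bsub>M\<^esub> (s \<otimes>\<^bsub>M\<^esub> t)" using a t by (simp add: monoid.m_assoc[OF M])
  moreover have "s \<otimes>\<^bsub>M\<^esub> t \<in> carrier M" using s(1) t by (rule monoid.m_closed[OF M])
  ultimately show ?thesis unfolding pid_def by blast
qed

lemma setM_mult:
  assumes M: "monoid M" and C: "C \<subseteq> carrier M" and y: "y \<in> setM M C" and t: "t \<in> carrier M"
  shows "y \<otimes>\<^bsub>M\<^esub> t \<in> setM M C"
proof -
  obtain c s where s: "c \<in> C" "s \<in> carrier M" "y = c \<otimes>\<^bsub>M\<^esub> s" using y unfolding setM_def by auto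
  then have "y \<otimes>\<^bsub>M\<^esub> t = c \<otimes>\<^bsub>M\<^esub> (s \<otimes>\<^bsub>M\<^esub> t)" using C t by (simp add: monoid.m_assoc[OF M] subsetD)
  moreover have "s \<otimes>\<^bsub>M\<^esub> t \<in> carrier M" using s(2) t by (rule monoid.m_closed[OF M])
  ultimately show ?thesis unfolding setM_def using s(1) by blast
qed

lemma setM_self:
  assumes M: "monoid M" and c: "c \<in> C" and C: "C \<subseteq> carrier M"
  shows "c \<in> setM M C"
proof -
  have "c = c \<otimes>\<^bsub>M\<^esub> \<one>\<^bsub>M\<^esub>" using c C by (simp add: monoid.r_one[OF M] subsetD)
  then show ?thesis unfolding setM_def using c monoid.one_closed[OF M] by blast
qed

lemma mult_closed_all: "monoid M \<Longrightarrow> \<forall>x\<in>carrier M. \<forall>s\<in>carrier M. x \<otimes>\<^bsub>M\<^esub> s \<in> carrier M"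
  by (simp add: monoid.m_closed)

lemma fa_closed_all: "monoid M \<Longrightarrow> \<forall>x\<in>free_act_carrier M n. \<forall>s\<in>carrier M. free_action M x s \<in> free_act_carrier M n"
  by (simp add: fa_closed)

lemma KP_RIH:
  assumes M: "monoid M" and K: "KP M"
  shows "RIHp M"
  unfolding RIHp_def
proof (intro ballI)
  fix a b assume a: "a \<in> carrier M" and b: "b \<in> carrier M"
  define x where "x i = (if i = 0 then a else b)" for i :: nat
  have x: "\<forall>i<2. x i \<in> carrier M" using a b unfolding x_def by auto
  let ?F = "free_act_carrier M 2" and ?fa = "free_action M" and ?\<pi> = "piof M x"
  obtain H where H: "finite H" "H \<subseteq> ?F \<times> ?F" "kerset M 2 ?\<pi> = gen_right_congruence M ?F ?fa H"
    using KP_D[OF K x] by (rule fgE)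
  define C where "C = (\<lambda>(p,q). ?\<pi> p) ` {(p,q) \<in> H. fst p \<noteq> fst q}"
  have Cfin: "finite C" unfolding C_def by (intro finite_imageI) (rule finite_subset[OF _ H(1)], auto)
  have HK: "H \<subseteq> kerset M 2 ?\<pi>" unfolding H(3) by (rule gen_sub)
  have Cprop: "c \<in> carrier M \<and> c \<in> pid M a \<inter> pid M b" if c: "c \<in> C" for c
  proof -
    obtain p q where pq: "(p,q) \<in> H" "fst p \<noteq> fst q" "c = ?\<pi> p" using c unfolding C_def by auto
    then have pF: "p \<in> ?F" and qF: "q \<in> ?F" and eq: "?\<pi> p = ?\<pi> q" using HK unfolding kerset_def by auto
    have cc: "c \<in> carrier M" using piof_closed[OF M x pF] pq by simp
    have fp: "fst p < 2" "snd p \<in> carrier M" using pF unfolding free_act_carrier_def by auto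
    have fq: "fst q < 2" "snd q \<in> carrier M" using qF unfolding free_act_carrier_def by auto
    have "c \<in> pid M a \<and> c \<in> pid M b"
    proof (cases "fst p = 0")
      case True
      then have "fst q = 1" using pq(2) fq by auto
      then have "c = a \<otimes>\<^bsub>M\<^esub> snd p" "c = b \<otimes>\<^bsub>M\<^esub> snd q"
        using True pq(3) eq unfolding piof_def x_def by auto
      then show ?thesis using fp fq unfolding pid_def image_iff by blast
    next
      case False
      then have "fst p = 1" "fst q = 0" using pq(2) fp fq by auto
      then have "c = b \<otimes>\<^bsub>M\<^esub> snd p" "c = a \<otimes>\<^bsub>M\<^esub> snd q"
        using pq(3) eq unfolding piof_def x_def by auto
      then show ?thesis using fp fq unfolding pid_def image_iff by blast
    qed
    then show ?thesis using cc by auto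
  qed
  have Cc: "C \<subseteq> carrier M" using Cprop by auto
  have "pid M a \<inter> pid M b = setM M C"
  proof
    show "setM M C \<subseteq> pid M a \<inter> pid M b"
    proof
      fix y assume "y \<in> setM M C"
      then obtain c m where cm: "c \<in> C" "m \<in> carrier M" "y = c \<otimes>\<^bsub>M\<^esub> m" unfolding setM_def by auto
      then show "y \<in> pid M a \<inter> pid M b" using pid_mult[OF M a, of c m] pid_mult[OF M b, of c m] Cprop[OF cm(1)] by auto
    qed
  next
    show "pid M a \<inter> pid M b \<subseteq> setM M C"
    proof
      fix y assume y: "y \<in> pid M a \<inter> pid M b"
      then obtain s t where st: "s \<in> carrier M" "t \<in> carrier M" "y = a \<otimes>\<^bsub>M\<^esub> s" "y = b \<otimes>\<^bsub>M\<^esub> t"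
        unfolding pid_def by auto
      define \<rho> where "\<rho> = {(p,q). p \<in> ?F \<and> q \<in> ?F \<and> ?\<pi> p = ?\<pi> q \<and> (fst p = fst q \<or> ?\<pi> p \<in> setM M C)}"
      have \<rho>rc: "right_congruence M ?F ?fa \<rho>"
      proof (rule rc_intro)
        show "\<rho> \<subseteq> ?F \<times> ?F" unfolding \<rho>_def by auto
      next
        fix p assume "p \<in> ?F" then show "(p,p) \<in> \<rho>" unfolding \<rho>_def by auto
      next
        fix p q assume "(p,q) \<in> \<rho>" then show "(q,p) \<in> \<rho>" unfolding \<rho>_def by auto
      next
        fix p q r assume "(p,q) \<in> \<rho>" "(q,r) \<in> \<rho>" then show "(p,r) \<in> \<rho>" unfolding \<rho>_def by auto
      next
        fix p q t assume pq: "(p,q) \<in> \<rho>" and t: "t \<in> carrier M"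
        then have pF: "p \<in> ?F" and qF: "q \<in> ?F" and e: "?\<pi> p = ?\<pi> q" and o: "fst p = fst q \<or> ?\<pi> p \<in> setM M C"
          unfolding \<rho>_def by auto
        have "?\<pi> (?fa p t) = ?\<pi> (?fa q t)" using piof_fa[OF M x pF t] piof_fa[OF M x qF t] e by simp
        moreover have "fst (?fa p t) = fst (?fa q t) \<or> ?\<pi> (?fa p t) \<in> setM M C"
          using o setM_mult[OF M Cc _ t] piof_fa[OF M x pF t] unfolding free_action_def by auto
        ultimately show "(?fa p t, ?fa q t) \<in> \<rho>" unfolding \<rho>_def using fa_closed[OF M pF t] fa_closed[OF M qF t] by auto
      qed
      have H\<rho>: "H \<subseteq> \<rho>"
      proof
        fix h assume h: "h \<in> H"
        then obtain p q where pq: "h = (p,q)" by (cases h)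
        then have pF: "p \<in> ?F" and qF: "q \<in> ?F" and e: "?\<pi> p = ?\<pi> q" using h HK unfolding kerset_def by auto
        have "fst p = fst q \<or> ?\<pi> p \<in> setM M C"
        proof (cases "fst p = fst q")
          case False
          then have "?\<pi> p \<in> C" unfolding C_def using h pq by force
          then show ?thesis using setM_self[OF M _ Cc] by blast
        qed simp
        then show "h \<in> \<rho>" unfolding \<rho>_def using pq pF qF e by auto
      qed
      have "((0,s),(1,t)) \<in> kerset M 2 ?\<pi>"
        using st unfolding kerset_def free_act_carrier_def piof_def x_def by auto
      then have "((0,s),(1,t)) \<in> \<rho>" using gen_least[OF \<rho>rc H\<rho>] H(3) by auto
      then have "?\<pi> (0,s) \<in> setM M C" unfolding \<rho>_def by auto
      then show "y \<in> setM M C" using st unfolding piof_def x_def by simp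
    qed
  qed
  then show "\<exists>C. finite C \<and> C \<subseteq> carrier M \<and> pid M a \<inter> pid M b = setM M C" using Cfin Cc by blast
qed

lemma ann_rc:
  assumes M: "monoid M" and a: "a \<in> carrier M"
  shows "right_congruence M (carrier M) (\<lambda>x s. x \<otimes>\<^bsub>M\<^esub> s) (ann M a)"
proof (rule rc_intro)
  show "ann M a \<subseteq> carrier M \<times> carrier M" unfolding ann_def by auto
next
  fix s t u assume st: "(s,t) \<in> ann M a" and u: "u \<in> carrier M"
  then have s: "s \<in> carrier M" and t: "t \<in> carrier M" and e: "a \<otimes>\<^bsub>M\<^esub> s = a \<otimes>\<^bsub>M\<^esub> t"
    unfolding ann_def by auto
  have "a \<otimes>\<^bsub>M\<^esub> (s \<otimes>\<^bsub>M\<^esub> u) = a \<otimes>\<^bsub>M\<^esub> (t \<otimes>\<^bsub>M\<^esub> u)"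
    using e a s t u by (simp add: monoid.m_assoc[OF M, symmetric])
  then show "(s \<otimes>\<^bsub>M\<^esub> u, t \<otimes>\<^bsub>M\<^esub> u) \<in> ann M a"
    unfolding ann_def using s t u by (simp add: monoid.m_closed[OF M])
qed (auto simp: ann_def)

lemma KP_FRE:
  assumes M: "monoid M" and K: "KP M"
  shows "FREp M"
  unfolding FREp_def
proof (intro ballI)
  fix a assume a: "a \<in> carrier M"
  define x where "x i = a" for i :: nat
  have x: "\<forall>i<1. x i \<in> carrier M" using a unfolding x_def by auto
  let ?F = "free_act_carrier M 1" and ?fa = "free_action M" and ?\<pi> = "piof M x"
    and ?mu = "\<lambda>x s. x \<otimes>\<^bsub>M\<^esub> s"
  obtain H where H: "finite H" "H \<subseteq> ?F \<times> ?F" "kerset M 1 ?\<pi> = gen_right_congruence M ?F ?fa H"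
    using KP_D[OF K x] by (rule fgE)
  have HK: "H \<subseteq> kerset M 1 ?\<pi>" unfolding H(3) by (rule gen_sub)
  define H' where "H' = (\<lambda>(p,q). (snd p, snd q)) ` H"
  have H'fin: "finite H'" unfolding H'_def using H(1) by simp
  have H'c: "H' \<subseteq> carrier M \<times> carrier M"
  proof
    fix h assume "h \<in> H'"
    then obtain p q where "(p,q) \<in> H" "h = (snd p, snd q)" unfolding H'_def by auto
    then show "h \<in> carrier M \<times> carrier M" using H(2) unfolding free_act_carrier_def by auto
  qed
  let ?G = "gen_right_congruence M (carrier M) ?mu H'"
  have Grc: "right_congruence M (carrier M) ?mu ?G" by (rule gen_rc[OF mult_closed_all[OF M] H'c])
  have "ann M a = ?G"
  proof
    show "?G \<subseteq> ann M a"
    proof (rule gen_least[OF ann_rc[OF M a]])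
      show "H' \<subseteq> ann M a"
      proof
        fix h assume "h \<in> H'"
        then obtain p q where pq: "(p,q) \<in> H" "h = (snd p, snd q)" unfolding H'_def by auto
        then have "p \<in> ?F" "q \<in> ?F" "?\<pi> p = ?\<pi> q" using HK unfolding kerset_def by auto
        then show "h \<in> ann M a" using pq(2) unfolding ann_def piof_def x_def free_act_carrier_def by auto
      qed
    qed
  next
    show "ann M a \<subseteq> ?G"
    proof
      fix h assume h: "h \<in> ann M a"
      then obtain s t where st: "h = (s,t)" "s \<in> carrier M" "t \<in> carrier M" "a \<otimes>\<^bsub>M\<^esub> s = a \<otimes>\<^bsub>M\<^esub> t"
        unfolding ann_def by auto
      define R where "R = {(p,q). p \<in> ?F \<and> q \<in> ?F \<and> (snd p, snd q) \<in> ?G}"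
      have Rrc: "right_congruence M ?F ?fa R"
      proof (rule rc_intro)
        show "R \<subseteq> ?F \<times> ?F" unfolding R_def by auto
      next
        fix p assume "p \<in> ?F" then show "(p,p) \<in> R" unfolding R_def free_act_carrier_def
          using rc_refl[OF Grc] by auto
      next
        fix p q assume "(p,q) \<in> R" then show "(q,p) \<in> R" unfolding R_def using rc_sym[OF Grc] by blast
      next
        fix p q r assume "(p,q) \<in> R" "(q,r) \<in> R" then show "(p,r) \<in> R" unfolding R_def using rc_trans[OF Grc] by blast
      next
        fix p q u assume pq: "(p,q) \<in> R" and u: "u \<in> carrier M"
        then have pF: "p \<in> ?F" and qF: "q \<in> ?F" and G: "(snd p, snd q) \<in> ?G" unfolding R_def by auto
        have "(snd p \<otimes>\<^bsub>M\<^esub> u, snd q \<otimes>\<^bsub>M\<^esub> u) \<in> ?G" using rc_compat[OF Grc G u] by simp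
        then show "(?fa p u, ?fa q u) \<in> R" unfolding R_def using fa_closed[OF M pF u] fa_closed[OF M qF u]
          by (simp add: free_action_def)
      qed
      have HR: "H \<subseteq> R"
      proof
        fix y assume y: "y \<in> H"
        then obtain p q where pq: "y = (p,q)" by (cases y)
        have "(snd p, snd q) \<in> H'" unfolding H'_def using y pq by force
        then have "(snd p, snd q) \<in> ?G" using gen_sub[of H'] by blast
        then show "y \<in> R" using y pq H(2) unfolding R_def by auto
      qed
      have "((0,s),(0,t)) \<in> kerset M 1 ?\<pi>"
        using st unfolding kerset_def free_act_carrier_def piof_def x_def by auto
      then have "((0,s),(0,t)) \<in> R" using gen_least[OF Rrc HR] H(3) by auto
      then show "h \<in> ?G" using st unfolding R_def by auto
    qed
  qed
  then show "\<exists>H. finite H \<and> H \<subseteq> carrier M \<times> carrier M \<and> ann M a = gen_right_congruence M (carrier M) ?mu H"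
    using H'fin H'c by blast
qed

lemma RF_KP:
  assumes M: "monoid M" and R: "RIHp M" and F: "FREp M"
  shows "KP M"
  unfolding KP_def
proof (intro allI impI)
  fix n :: nat and x assume x: "\<forall>i<n. x i \<in> carrier M"
  let ?F = "free_act_carrier M n" and ?fa = "free_action M" and ?\<pi> = "piof M x"
    and ?mu = "\<lambda>x s. x \<otimes>\<^bsub>M\<^esub> s"
  define Hs where "Hs i = (SOME H. finite H \<and> H \<subseteq> carrier M \<times> carrier M \<and>
      ann M (x i) = gen_right_congruence M (carrier M) ?mu H)" for i
  define Cs where "Cs i j = (SOME C. finite C \<and> C \<subseteq> carrier M \<and> pid M (x i) \<inter> pid M (x j) = setM M C)" for i j
  define U where "U i c = (SOME u. u \<in> carrier M \<and> c = x i \<otimes>\<^bsub>M\<^esub> u)" for i c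
  have Hs: "finite (Hs i) \<and> Hs i \<subseteq> carrier M \<times> carrier M \<and>
      ann M (x i) = gen_right_congruence M (carrier M) ?mu (Hs i)" if i: "i < n" for i
  proof -
    have "\<exists>H. finite H \<and> H \<subseteq> carrier M \<times> carrier M \<and> ann M (x i) = gen_right_congruence M (carrier M) ?mu H"
      using F x i unfolding FREp_def by blast
    then show ?thesis unfolding Hs_def by (rule someI_ex)
  qed
  have Cs: "finite (Cs i j) \<and> Cs i j \<subseteq> carrier M \<and> pid M (x i) \<inter> pid M (x j) = setM M (Cs i j)"
    if i: "i < n" and j: "j < n" for i j
  proof -
    have "\<exists>C. finite C \<and> C \<subseteq> carrier M \<and> pid M (x i) \<inter> pid M (x j) = setM M C"
      using R x i j unfolding RIHp_def by blast
    then show ?thesis unfolding Cs_def by (rule someI_ex)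
  qed
  have Uprop: "U i c \<in> carrier M \<and> c = x i \<otimes>\<^bsub>M\<^esub> U i c" if "c \<in> pid M (x i)" for i c
  proof -
    have "\<exists>u. u \<in> carrier M \<and> c = x i \<otimes>\<^bsub>M\<^esub> u" using that unfolding pid_def by blast
    then show ?thesis unfolding U_def by (rule someI_ex)
  qed
  have Cpid: "c \<in> pid M (x i) \<and> c \<in> pid M (x j)" if i: "i < n" and j: "j < n" and c: "c \<in> Cs i j" for i j c
  proof -
    have "c \<in> setM M (Cs i j)" using setM_self[OF M c] Cs[OF i j] by blast
    then show ?thesis using Cs[OF i j] by blast
  qed
  define H1 where "H1 = (\<Union>i\<in>{..<n}. (\<lambda>(s,t). ((i,s),(i,t))) ` Hs i)"
  define H2 where "H2 = (\<Union>i\<in>{..<n}. \<Union>j\<in>{..<n}. (\<lambda>c. ((i, U i c),(j, U j c))) ` Cs i j)"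
  define H where "H = H1 \<union> H2"
  have Hfin: "finite H" unfolding H_def H1_def H2_def
    by (intro finite_UnI finite_UN_I finite_imageI) (simp_all add: Hs Cs)
  have H1E: "\<exists>i s t. i < n \<and> (s,t) \<in> Hs i \<and> h = ((i,s),(i,t))" if "h \<in> H1" for h
    using that unfolding H1_def by auto
  have H2E: "\<exists>i j c. i < n \<and> j < n \<and> c \<in> Cs i j \<and> h = ((i, U i c),(j, U j c))" if "h \<in> H2" for h
    using that unfolding H2_def by auto
  have HK: "H \<subseteq> kerset M n ?\<pi>"
  proof
    fix h assume h: "h \<in> H"
    show "h \<in> kerset M n ?\<pi>"
    proof (cases "h \<in> H1")
      case True
      then obtain i s t where ist: "i < n" "(s,t) \<in> Hs i" "h = ((i,s),(i,t))" using H1E by blast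
      have "(s,t) \<in> ann M (x i)" using Hs[OF ist(1)] ist(2) gen_sub by blast
      then show ?thesis using ist unfolding ann_def kerset_def free_act_carrier_def piof_def by auto
    next
      case False
      then have "h \<in> H2" using h unfolding H_def by auto
      then obtain i j c where ijc: "i < n" "j < n" "c \<in> Cs i j" "h = ((i, U i c),(j, U j c))" using H2E by blast
      have "U i c \<in> carrier M \<and> c = x i \<otimes>\<^bsub>M\<^esub> U i c" "U j c \<in> carrier M \<and> c = x j \<otimes>\<^bsub>M\<^esub> U j c"
        using Uprop Cpid[OF ijc(1-3)] by auto
      then show ?thesis using ijc unfolding kerset_def free_act_carrier_def piof_def by auto
    qed
  qed
  have HF: "H \<subseteq> ?F \<times> ?F" using HK unfolding kerset_def by auto
  let ?G = "gen_right_congruence M ?F ?fa H"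
  have Grc: "right_congruence M ?F ?fa ?G" by (rule gen_rc[OF fa_closed_all[OF M] HF])
  have kerrc: "right_congruence M ?F ?fa (kerset M n ?\<pi>)" by (rule ker_rc[OF M idl_hom[OF M x]])
  have HG: "H \<subseteq> ?G" by (rule gen_sub)
  have same: "((i,s),(i,t)) \<in> ?G" if i: "i < n" and s: "s \<in> carrier M" and t: "t \<in> carrier M"
    and e: "x i \<otimes>\<^bsub>M\<^esub> s = x i \<otimes>\<^bsub>M\<^esub> t" for i s t
  proof -
    define Ri where "Ri = {(s,t). s \<in> carrier M \<and> t \<in> carrier M \<and> ((i,s),(i,t)) \<in> ?G}"
    have Rrc: "right_congruence M (carrier M) ?mu Ri"
    proof (rule rc_intro)
      show "Ri \<subseteq> carrier M \<times> carrier M" unfolding Ri_def by auto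
    next
      fix p assume "p \<in> carrier M" then show "(p,p) \<in> Ri" unfolding Ri_def
        using rc_refl[OF Grc, of "(i,p)"] i unfolding free_act_carrier_def by auto
    next
      fix p q assume "(p,q) \<in> Ri" then show "(q,p) \<in> Ri" unfolding Ri_def using rc_sym[OF Grc] by blast
    next
      fix p q r assume "(p,q) \<in> Ri" "(q,r) \<in> Ri" then show "(p,r) \<in> Ri" unfolding Ri_def using rc_trans[OF Grc] by blast
    next
      fix p q u assume pq: "(p,q) \<in> Ri" and u: "u \<in> carrier M"
      then have p: "p \<in> carrier M" and q: "q \<in> carrier M" and G: "((i,p),(i,q)) \<in> ?G" unfolding Ri_def by auto
      have "(?fa (i,p) u, ?fa (i,q) u) \<in> ?G" by (rule rc_compat[OF Grc G u])
      then show "(p \<otimes>\<^bsub>M\<^esub> u, q \<otimes>\<^bsub>M\<^esub> u) \<in> Ri" unfolding Ri_def free_action_def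
        using p q u by (simp add: monoid.m_closed[OF M])
    qed
    have "Hs i \<subseteq> Ri"
    proof
      fix y assume y: "y \<in> Hs i"
      then obtain p q where pq: "y = (p,q)" by (cases y)
      have "((i,p),(i,q)) \<in> H1" unfolding H1_def using i y pq by force
      then have "((i,p),(i,q)) \<in> ?G" using HG unfolding H_def by blast
      then show "y \<in> Ri" unfolding Ri_def using pq y Hs[OF i] by auto
    qed
    then have "ann M (x i) \<subseteq> Ri" using gen_least[OF Rrc] Hs[OF i] by metis
    moreover have "(s,t) \<in> ann M (x i)" unfolding ann_def using s t e by auto
    ultimately show ?thesis unfolding Ri_def by auto
  qed
  have eq: "kerset M n ?\<pi> = ?G"
  proof
    show "?G \<subseteq> kerset M n ?\<pi>" by (rule gen_least[OF kerrc HK])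
  next
    show "kerset M n ?\<pi> \<subseteq> ?G"
    proof
      fix h assume h: "h \<in> kerset M n ?\<pi>"
      then obtain i s j t where hh: "h = ((i,s),(j,t))" by (cases h) auto
      then have ij: "i < n" "j < n" and st: "s \<in> carrier M" "t \<in> carrier M" and e: "x i \<otimes>\<^bsub>M\<^esub> s = x j \<otimes>\<^bsub>M\<^esub> t"
        using h unfolding kerset_def free_act_carrier_def piof_def by auto
      have xi: "x i \<in> carrier M" and xj: "x j \<in> carrier M" using x ij by auto
      have "x i \<otimes>\<^bsub>M\<^esub> s \<in> pid M (x i) \<inter> pid M (x j)" unfolding pid_def image_iff using st e by blast
      then have "x i \<otimes>\<^bsub>M\<^esub> s \<in> setM M (Cs i j)" using Cs[OF ij] by simp
      then obtain c m where cm: "c \<in> Cs i j" "m \<in> carrier M" "x i \<otimes>\<^bsub>M\<^esub> s = c \<otimes>\<^bsub>M\<^esub> m"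
        unfolding setM_def by auto
      have ui: "U i c \<in> carrier M" "c = x i \<otimes>\<^bsub>M\<^esub> U i c" using Uprop Cpid[OF ij cm(1)] by auto
      have uj: "U j c \<in> carrier M" "c = x j \<otimes>\<^bsub>M\<^esub> U j c" using Uprop Cpid[OF ij cm(1)] by auto
      have um: "U i c \<otimes>\<^bsub>M\<^esub> m \<in> carrier M" "U j c \<otimes>\<^bsub>M\<^esub> m \<in> carrier M"
        using ui(1) uj(1) cm(2) by (simp_all add: monoid.m_closed[OF M])
      have e1: "x i \<otimes>\<^bsub>M\<^esub> s = x i \<otimes>\<^bsub>M\<^esub> (U i c \<otimes>\<^bsub>M\<^esub> m)"
        using cm(3) ui xi cm(2) by (simp add: monoid.m_assoc[OF M, symmetric])
      have e2: "x j \<otimes>\<^bsub>M\<^esub> (U j c \<otimes>\<^bsub>M\<^esub> m) = x j \<otimes>\<^bsub>M\<^esub> t"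
        using cm(3) uj xj cm(2) e by (simp add: monoid.m_assoc[OF M, symmetric])
      have g1: "((i,s),(i, U i c \<otimes>\<^bsub>M\<^esub> m)) \<in> ?G" by (rule same[OF ij(1) st(1) um(1) e1])
      have g3: "((j, U j c \<otimes>\<^bsub>M\<^esub> m),(j,t)) \<in> ?G" by (rule same[OF ij(2) um(2) st(2) e2])
      have "((i, U i c),(j, U j c)) \<in> H2" unfolding H2_def using ij cm(1) by blast
      then have "((i, U i c),(j, U j c)) \<in> ?G" using HG unfolding H_def by blast
      from rc_compat[OF Grc this cm(2)]
      have g2: "((i, U i c \<otimes>\<^bsub>M\<^esub> m),(j, U j c \<otimes>\<^bsub>M\<^esub> m)) \<in> ?G" by (simp add: free_action_def)
      show "h \<in> ?G" unfolding hh using rc_trans[OF Grc rc_trans[OF Grc g1 g2] g3] .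
    qed
  qed
  show "fg_right_congruence M ?F ?fa (kerset M n ?\<pi>)" unfolding fg_right_congruence_def
    by (intro conjI kerrc exI[of _ H]) (simp_all only: Hfin HF eq)
qed

lemma wrc_iff_RF: "monoid M \<Longrightarrow> weakly_right_coherent M \<longleftrightarrow> RIHp M \<and> FREp M"
  using wrc_iff_KP KP_RIH KP_FRE RF_KP by metis

lemma pid_prod: fixes S :: "'a monoid" and T :: "'b monoid" shows "pid (S \<times>\<times> T) (a,b) = pid S a \<times> pid T b"
proof -
  have e: "(\<lambda>s. (a,b) \<otimes>\<^bsub>S \<times>\<times> T\<^esub> s) = map_prod (\<lambda>u. a \<otimes>\<^bsub>S\<^esub> u) (\<lambda>v. b \<otimes>\<^bsub>T\<^esub> v)"
    by (rule ext) (simp add: mult_DirProd' map_prod_def split_def)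
  show ?thesis unfolding pid_def carrier_DirProd e by (rule map_prod_surj_on) simp_all
qed

lemma RIHpD: "RIHp M \<Longrightarrow> a \<in> carrier M \<Longrightarrow> b \<in> carrier M \<Longrightarrow>
   \<exists>C. finite C \<and> C \<subseteq> carrier M \<and> pid M a \<inter> pid M b = setM M C"
  unfolding RIHp_def by blast

lemma setM_prod: fixes S :: "'a monoid" and T :: "'b monoid" shows "setM (S \<times>\<times> T) (C1 \<times> C2) = setM S C1 \<times> setM T C2"
proof
  show "setM (S \<times>\<times> T) (C1 \<times> C2) \<subseteq> setM S C1 \<times> setM T C2"
  proof
    fix y assume "y \<in> setM (S \<times>\<times> T) (C1 \<times> C2)"
    then obtain c m where cm: "c \<in> C1 \<times> C2" "m \<in> carrier (S \<times>\<times> T)" "y = c \<otimes>\<^bsub>S \<times>\<times> T\<^esub> m"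
      unfolding setM_def by auto
    obtain c1 c2 m1 m2 where cc: "c = (c1,c2)" "m = (m1,m2)" by (cases c, cases m)
    then have "y = (c1 \<otimes>\<^bsub>S\<^esub> m1, c2 \<otimes>\<^bsub>T\<^esub> m2)" "c1 \<in> C1" "c2 \<in> C2" "m1 \<in> carrier S" "m2 \<in> carrier T"
      using cm by auto
    then show "y \<in> setM S C1 \<times> setM T C2" unfolding setM_def by blast
  qed
next
  show "setM S C1 \<times> setM T C2 \<subseteq> setM (S \<times>\<times> T) (C1 \<times> C2)"
  proof
    fix y assume "y \<in> setM S C1 \<times> setM T C2"
    then obtain c1 m1 c2 m2 where "c1 \<in> C1" "m1 \<in> carrier S" "c2 \<in> C2" "m2 \<in> carrier T"
      "y = (c1 \<otimes>\<^bsub>S\<^esub> m1, c2 \<otimes>\<^bsub>T\<^esub> m2)" unfolding setM_def by auto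
    then have "y = (c1,c2) \<otimes>\<^bsub>S \<times>\<times> T\<^esub> (m1,m2)" "(c1,c2) \<in> C1 \<times> C2" "(m1,m2) \<in> carrier (S \<times>\<times> T)" by auto
    then show "y \<in> setM (S \<times>\<times> T) (C1 \<times> C2)" unfolding setM_def by blast
  qed
qed

lemma RIH_prod:
  fixes S :: "'a monoid" and T :: "'b monoid"
  assumes R1: "RIHp S" and R2: "RIHp T"
  shows "RIHp (S \<times>\<times> T)"
  unfolding RIHp_def
proof (intro ballI)
  fix p q assume p: "p \<in> carrier (S \<times>\<times> T)" and q: "q \<in> carrier (S \<times>\<times> T)"
  obtain a b c d where pq: "p = (a,b)" "q = (c,d)" by (cases p, cases q)
  have ab: "a \<in> carrier S" "b \<in> carrier T" "c \<in> carrier S" "d \<in> carrier T" using p q pq by auto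
  obtain C1 where C1: "finite C1" "C1 \<subseteq> carrier S" "pid S a \<inter> pid S c = setM S C1"
    using RIHpD[OF R1 ab(1) ab(3)] by blast
  obtain C2 where C2: "finite C2" "C2 \<subseteq> carrier T" "pid T b \<inter> pid T d = setM T C2"
    using RIHpD[OF R2 ab(2) ab(4)] by blast
  have "pid (S \<times>\<times> T) p \<inter> pid (S \<times>\<times> T) q = setM (S \<times>\<times> T) (C1 \<times> C2)"
    unfolding pq pid_prod setM_prod Times_Int_Times C1(3) C2(3) ..
  moreover have "finite (C1 \<times> C2)" "C1 \<times> C2 \<subseteq> carrier (S \<times>\<times> T)" using C1 C2 by auto
  ultimately show "\<exists>C. finite C \<and> C \<subseteq> carrier (S \<times>\<times> T) \<and> pid (S \<times>\<times> T) p \<inter> pid (S \<times>\<times> T) q = setM (S \<times>\<times> T) C"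
    by blast
qed

lemma pid_one: "monoid M \<Longrightarrow> pid M \<one>\<^bsub>M\<^esub> = carrier M"
  unfolding pid_def by (simp add: monoid.l_one)

lemma setM_fst:
  fixes S :: "'a monoid" and T :: "'b monoid"
  assumes "C \<subseteq> carrier (S \<times>\<times> T)" "monoid T"
  shows "fst ` setM (S \<times>\<times> T) C = setM S (fst ` C)"
proof
  show "fst ` setM (S \<times>\<times> T) C \<subseteq> setM S (fst ` C)"
  proof
    fix y assume "y \<in> fst ` setM (S \<times>\<times> T) C"
    then obtain c m where cm: "c \<in> C" "m \<in> carrier (S \<times>\<times> T)" "y = fst (c \<otimes>\<^bsub>S \<times>\<times> T\<^esub> m)"
      unfolding setM_def by auto
    then have "y = fst c \<otimes>\<^bsub>S\<^esub> fst m" "fst c \<in> fst ` C" "fst m \<in> carrier S"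
      by (auto simp: mult_DirProd')
    then show "y \<in> setM S (fst ` C)" unfolding setM_def by blast
  qed
next
  show "setM S (fst ` C) \<subseteq> fst ` setM (S \<times>\<times> T) C"
  proof
    fix y assume "y \<in> setM S (fst ` C)"
    then obtain c m where cm: "c \<in> C" "m \<in> carrier S" "y = fst c \<otimes>\<^bsub>S\<^esub> m"
      unfolding setM_def by auto
    have one: "\<one>\<^bsub>T\<^esub> \<in> carrier T" using assms(2) by (simp add: monoid.one_closed)
    have "(m, \<one>\<^bsub>T\<^esub>) \<in> carrier (S \<times>\<times> T)" using cm one by simp
    then have "c \<otimes>\<^bsub>S \<times>\<times> T\<^esub> (m, \<one>\<^bsub>T\<^esub>) \<in> setM (S \<times>\<times> T) C" unfolding setM_def using cm(1) by blast
    moreover have "y = fst (c \<otimes>\<^bsub>S \<times>\<times> T\<^esub> (m, \<one>\<^bsub>T\<^esub>))" using cm by (simp add: mult_DirProd')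
    ultimately show "y \<in> fst ` setM (S \<times>\<times> T) C" by blast
  qed
qed

lemma setM_snd:
  fixes S :: "'a monoid" and T :: "'b monoid"
  assumes "C \<subseteq> carrier (S \<times>\<times> T)" "monoid S"
  shows "snd ` setM (S \<times>\<times> T) C = setM T (snd ` C)"
proof
  show "snd ` setM (S \<times>\<times> T) C \<subseteq> setM T (snd ` C)"
  proof
    fix y assume "y \<in> snd ` setM (S \<times>\<times> T) C"
    then obtain c m where cm: "c \<in> C" "m \<in> carrier (S \<times>\<times> T)" "y = snd (c \<otimes>\<^bsub>S \<times>\<times> T\<^esub> m)"
      unfolding setM_def by auto
    then have "y = snd c \<otimes>\<^bsub>T\<^esub> snd m" "snd c \<in> snd ` C" "snd m \<in> carrier T"
      by (auto simp: mult_DirProd')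
    then show "y \<in> setM T (snd ` C)" unfolding setM_def by blast
  qed
next
  show "setM T (snd ` C) \<subseteq> snd ` setM (S \<times>\<times> T) C"
  proof
    fix y assume "y \<in> setM T (snd ` C)"
    then obtain c m where cm: "c \<in> C" "m \<in> carrier T" "y = snd c \<otimes>\<^bsub>T\<^esub> m"
      unfolding setM_def by auto
    have one: "\<one>\<^bsub>S\<^esub> \<in> carrier S" using assms(2) by (simp add: monoid.one_closed)
    have "(\<one>\<^bsub>S\<^esub>, m) \<in> carrier (S \<times>\<times> T)" using cm one by simp
    then have "c \<otimes>\<^bsub>S \<times>\<times> T\<^esub> (\<one>\<^bsub>S\<^esub>, m) \<in> setM (S \<times>\<times> T) C" unfolding setM_def using cm(1) by blast
    moreover have "y = snd (c \<otimes>\<^bsub>S \<times>\<times> T\<^esub> (\<one>\<^bsub>S\<^esub>, m))" using cm by (simp add: mult_DirProd')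
    ultimately show "y \<in> snd ` setM (S \<times>\<times> T) C" by blast
  qed
qed

lemma RIH_fst:
  fixes S :: "'a monoid" and T :: "'b monoid"
  assumes S: "monoid S" and T: "monoid T" and R: "RIHp (S \<times>\<times> T)"
  shows "RIHp S"
  unfolding RIHp_def
proof (intro ballI)
  fix a c assume a: "a \<in> carrier S" and c: "c \<in> carrier S"
  have one: "\<one>\<^bsub>T\<^esub> \<in> carrier T" using T by (simp add: monoid.one_closed)
  obtain C where C: "finite C" "C \<subseteq> carrier (S \<times>\<times> T)"
    "pid (S \<times>\<times> T) (a, \<one>\<^bsub>T\<^esub>) \<inter> pid (S \<times>\<times> T) (c, \<one>\<^bsub>T\<^esub>) = setM (S \<times>\<times> T) C"
  proof -
    have "(a, \<one>\<^bsub>T\<^esub>) \<in> carrier (S \<times>\<times> T)" "(c, \<one>\<^bsub>T\<^esub>) \<in> carrier (S \<times>\<times> T)" using a c one by auto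
    then show ?thesis using RIHpD[OF R] that by blast
  qed
  have "(pid S a \<inter> pid S c) \<times> carrier T = setM (S \<times>\<times> T) C"
    using C(3) unfolding pid_prod pid_one[OF T] Times_Int_Times by simp
  then have "fst ` ((pid S a \<inter> pid S c) \<times> carrier T) = setM S (fst ` C)"
    using setM_fst[OF C(2) T] by simp
  then have "pid S a \<inter> pid S c = setM S (fst ` C)" using one by (simp add: fst_image_times split: if_splits)
  moreover have "finite (fst ` C)" "fst ` C \<subseteq> carrier S" using C by auto
  ultimately show "\<exists>C. finite C \<and> C \<subseteq> carrier S \<and> pid S a \<inter> pid S c = setM S C" by blast
qed

lemma RIH_snd:
  fixes S :: "'a monoid" and T :: "'b monoid"
  assumes S: "monoid S" and T: "monoid T" and R: "RIHp (S \<times>\<times> T)"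
  shows "RIHp T"
  unfolding RIHp_def
proof (intro ballI)
  fix a c assume a: "a \<in> carrier T" and c: "c \<in> carrier T"
  have one: "\<one>\<^bsub>S\<^esub> \<in> carrier S" using S by (simp add: monoid.one_closed)
  obtain C where C: "finite C" "C \<subseteq> carrier (S \<times>\<times> T)"
    "pid (S \<times>\<times> T) (\<one>\<^bsub>S\<^esub>, a) \<inter> pid (S \<times>\<times> T) (\<one>\<^bsub>S\<^esub>, c) = setM (S \<times>\<times> T) C"
  proof -
    have "(\<one>\<^bsub>S\<^esub>, a) \<in> carrier (S \<times>\<times> T)" "(\<one>\<^bsub>S\<^esub>, c) \<in> carrier (S \<times>\<times> T)" using a c one by auto
    then show ?thesis using RIHpD[OF R] that by blast
  qed
  have "carrier S \<times> (pid T a \<inter> pid T c) = setM (S \<times>\<times> T) C"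
    using C(3) unfolding pid_prod pid_one[OF S] Times_Int_Times by simp
  then have "snd ` (carrier S \<times> (pid T a \<inter> pid T c)) = setM T (snd ` C)"
    using setM_snd[OF C(2) S] by simp
  then have "pid T a \<inter> pid T c = setM T (snd ` C)" using one by (simp add: snd_image_times split: if_splits)
  moreover have "finite (snd ` C)" "snd ` C \<subseteq> carrier T" using C by auto
  ultimately show "\<exists>C. finite C \<and> C \<subseteq> carrier T \<and> pid T a \<inter> pid T c = setM T C" by blast
qed

lemma ann_prod:
  fixes S :: "'a monoid" and T :: "'b monoid"
  shows "((s,t),(s',t')) \<in> ann (S \<times>\<times> T) (a,b) \<longleftrightarrow> (s,s') \<in> ann S a \<and> (t,t') \<in> ann T b"
  unfolding ann_def by auto

lemma FREpD: "FREp M \<Longrightarrow> a \<in> carrier M \<Longrightarrow>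
   \<exists>H. finite H \<and> H \<subseteq> carrier M \<times> carrier M \<and> ann M a = gen_right_congruence M (carrier M) (\<lambda>x s. x \<otimes>\<^bsub>M\<^esub> s) H"
  unfolding FREp_def by blast

lemma ann_refl: "monoid M \<Longrightarrow> a \<in> carrier M \<Longrightarrow> s \<in> carrier M \<Longrightarrow> (s,s) \<in> ann M a"
  unfolding ann_def by auto

lemma FRE_prod:
  fixes S :: "'a monoid" and T :: "'b monoid"
  assumes S: "monoid S" and T: "monoid T" and F1: "FREp S" and F2: "FREp T"
  shows "FREp (S \<times>\<times> T)"
  unfolding FREp_def
proof (intro ballI)
  let ?P = "S \<times>\<times> T" and ?mu = "\<lambda>x s. x \<otimes>\<^bsub>S \<times>\<times> T\<^esub> s"
  have PM: "monoid ?P" by (rule DirProd_monoid[OF S T])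
  have oneS: "\<one>\<^bsub>S\<^esub> \<in> carrier S" using S by (simp add: monoid.one_closed)
  have oneT: "\<one>\<^bsub>T\<^esub> \<in> carrier T" using T by (simp add: monoid.one_closed)
  fix p assume p: "p \<in> carrier ?P"
  obtain a b where ab: "p = (a,b)" by (cases p)
  have a: "a \<in> carrier S" and b: "b \<in> carrier T" using p ab by auto
  obtain H1 where H1: "finite H1" "H1 \<subseteq> carrier S \<times> carrier S"
    "ann S a = gen_right_congruence S (carrier S) (\<lambda>x s. x \<otimes>\<^bsub>S\<^esub> s) H1"
    using FREpD[OF F1 a] by blast
  obtain H2 where H2: "finite H2" "H2 \<subseteq> carrier T \<times> carrier T"
    "ann T b = gen_right_congruence T (carrier T) (\<lambda>x s. x \<otimes>\<^bsub>T\<^esub> s) H2"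
    using FREpD[OF F2 b] by blast
  define H where "H = (\<lambda>(s,s'). ((s,\<one>\<^bsub>T\<^esub>),(s',\<one>\<^bsub>T\<^esub>))) ` H1 \<union> (\<lambda>(t,t'). ((\<one>\<^bsub>S\<^esub>,t),(\<one>\<^bsub>S\<^esub>,t'))) ` H2"
  have Hfin: "finite H" unfolding H_def using H1(1) H2(1) by simp
  have HP: "H \<subseteq> carrier ?P \<times> carrier ?P" unfolding H_def using H1(2) H2(2) oneS oneT by auto
  let ?G = "gen_right_congruence ?P (carrier ?P) ?mu H"
  have Grc: "right_congruence ?P (carrier ?P) ?mu ?G" by (rule gen_rc[OF mult_closed_all[OF PM] HP])
  have HG: "H \<subseteq> ?G" by (rule gen_sub)
  have eq: "ann ?P (a,b) = ?G"
  proof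
    show "?G \<subseteq> ann ?P (a,b)"
    proof (rule gen_least[OF ann_rc[OF PM p[unfolded ab]]])
      show "H \<subseteq> ann ?P (a,b)"
      proof
        fix h assume h: "h \<in> H"
        show "h \<in> ann ?P (a,b)"
        proof (cases "h \<in> (\<lambda>(s,s'). ((s,\<one>\<^bsub>T\<^esub>),(s',\<one>\<^bsub>T\<^esub>))) ` H1")
          case True
          then obtain s s' where ss: "(s,s') \<in> H1" "h = ((s,\<one>\<^bsub>T\<^esub>),(s',\<one>\<^bsub>T\<^esub>))" by auto
          have "(s,s') \<in> ann S a" using ss(1) H1(3) gen_sub by blast
          moreover have "(\<one>\<^bsub>T\<^esub>,\<one>\<^bsub>T\<^esub>) \<in> ann T b" by (rule ann_refl[OF T b oneT])
          ultimately show ?thesis unfolding ss(2) ann_prod by simp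
        next
          case False
          then obtain t t' where tt: "(t,t') \<in> H2" "h = ((\<one>\<^bsub>S\<^esub>,t),(\<one>\<^bsub>S\<^esub>,t'))" using h unfolding H_def by auto
          have "(t,t') \<in> ann T b" using tt(1) H2(3) gen_sub by blast
          moreover have "(\<one>\<^bsub>S\<^esub>,\<one>\<^bsub>S\<^esub>) \<in> ann S a" by (rule ann_refl[OF S a oneS])
          ultimately show ?thesis unfolding tt(2) ann_prod by simp
        qed
      qed
    qed
  next
    show "ann ?P (a,b) \<subseteq> ?G"
    proof
      fix h assume h: "h \<in> ann ?P (a,b)"
      obtain s t s' t' where hh: "h = ((s,t),(s',t'))" by (cases h) auto
      have A1: "(s,s') \<in> ann S a" and A2: "(t,t') \<in> ann T b" using h unfolding hh ann_prod by auto
      then have cs: "s \<in> carrier S" "s' \<in> carrier S" "t \<in> carrier T" "t' \<in> carrier T" unfolding ann_def by auto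
      define \<sigma>1 where "\<sigma>1 = {(u,u'). u \<in> carrier S \<and> u' \<in> carrier S \<and> (\<forall>w\<in>carrier T. ((u,w),(u',w)) \<in> ?G)}"
      have \<sigma>1rc: "right_congruence S (carrier S) (\<lambda>x s. x \<otimes>\<^bsub>S\<^esub> s) \<sigma>1"
      proof (rule rc_intro)
        show "\<sigma>1 \<subseteq> carrier S \<times> carrier S" unfolding \<sigma>1_def by auto
      next
        fix u assume "u \<in> carrier S" then show "(u,u) \<in> \<sigma>1" unfolding \<sigma>1_def using rc_refl[OF Grc] by auto
      next
        fix u u' assume "(u,u') \<in> \<sigma>1" then show "(u',u) \<in> \<sigma>1" unfolding \<sigma>1_def using rc_sym[OF Grc] by blast
      next
        fix u u' u'' assume "(u,u') \<in> \<sigma>1" "(u',u'') \<in> \<sigma>1" then show "(u,u'') \<in> \<sigma>1"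
          unfolding \<sigma>1_def using rc_trans[OF Grc] by blast
      next
        fix u u' v assume uu: "(u,u') \<in> \<sigma>1" and v: "v \<in> carrier S"
        then have u: "u \<in> carrier S" "u' \<in> carrier S" and G: "\<And>w. w \<in> carrier T \<Longrightarrow> ((u,w),(u',w)) \<in> ?G"
          unfolding \<sigma>1_def by auto
        have "((u \<otimes>\<^bsub>S\<^esub> v, w),(u' \<otimes>\<^bsub>S\<^esub> v, w)) \<in> ?G" if w: "w \<in> carrier T" for w
        proof -
          have "((u,w) \<otimes>\<^bsub>?P\<^esub> (v,\<one>\<^bsub>T\<^esub>), (u',w) \<otimes>\<^bsub>?P\<^esub> (v,\<one>\<^bsub>T\<^esub>)) \<in> ?G"
            using rc_compat[OF Grc G[OF w], of "(v,\<one>\<^bsub>T\<^esub>)"] v oneT by simp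
          then show ?thesis using w by (simp add: monoid.r_one[OF T])
        qed
        then show "(u \<otimes>\<^bsub>S\<^esub> v, u' \<otimes>\<^bsub>S\<^esub> v) \<in> \<sigma>1" unfolding \<sigma>1_def using u v by (simp add: monoid.m_closed[OF S])
      qed
      have "H1 \<subseteq> \<sigma>1"
      proof
        fix y assume y: "y \<in> H1"
        then obtain u u' where uu: "y = (u,u')" by (cases y)
        then have u: "u \<in> carrier S" "u' \<in> carrier S" using y H1(2) by auto
        have g: "((u,\<one>\<^bsub>T\<^esub>),(u',\<one>\<^bsub>T\<^esub>)) \<in> ?G" using HG y uu unfolding H_def by force
        have "((u,w),(u',w)) \<in> ?G" if w: "w \<in> carrier T" for w
        proof -
          have "((u,\<one>\<^bsub>T\<^esub>) \<otimes>\<^bsub>?P\<^esub> (\<one>\<^bsub>S\<^esub>,w), (u',\<one>\<^bsub>T\<^esub>) \<otimes>\<^bsub>?P\<^esub> (\<one>\<^bsub>S\<^esub>,w)) \<in> ?G"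
            using rc_compat[OF Grc g, of "(\<one>\<^bsub>S\<^esub>,w)"] w oneS by simp
          then show ?thesis using w u by (simp add: monoid.r_one[OF S] monoid.l_one[OF T])
        qed
        then show "y \<in> \<sigma>1" unfolding \<sigma>1_def using uu u by auto
      qed
      then have "ann S a \<subseteq> \<sigma>1" unfolding H1(3) by (rule gen_least[OF \<sigma>1rc])
      then have g1: "((s,t),(s',t)) \<in> ?G" using A1 cs unfolding \<sigma>1_def by auto
      define \<sigma>2 where "\<sigma>2 = {(v,v'). v \<in> carrier T \<and> v' \<in> carrier T \<and> (\<forall>w\<in>carrier S. ((w,v),(w,v')) \<in> ?G)}"
      have \<sigma>2rc: "right_congruence T (carrier T) (\<lambda>x s. x \<otimes>\<^bsub>T\<^esub> s) \<sigma>2"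
      proof (rule rc_intro)
        show "\<sigma>2 \<subseteq> carrier T \<times> carrier T" unfolding \<sigma>2_def by auto
      next
        fix u assume "u \<in> carrier T" then show "(u,u) \<in> \<sigma>2" unfolding \<sigma>2_def using rc_refl[OF Grc] by auto
      next
        fix u u' assume "(u,u') \<in> \<sigma>2" then show "(u',u) \<in> \<sigma>2" unfolding \<sigma>2_def using rc_sym[OF Grc] by blast
      next
        fix u u' u'' assume "(u,u') \<in> \<sigma>2" "(u',u'') \<in> \<sigma>2" then show "(u,u'') \<in> \<sigma>2"
          unfolding \<sigma>2_def using rc_trans[OF Grc] by blast
      next
        fix u u' v assume uu: "(u,u') \<in> \<sigma>2" and v: "v \<in> carrier T"
        then have u: "u \<in> carrier T" "u' \<in> carrier T" and G: "\<And>w. w \<in> carrier S \<Longrightarrow> ((w,u),(w,u')) \<in> ?G"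
          unfolding \<sigma>2_def by auto
        have "((w, u \<otimes>\<^bsub>T\<^esub> v),(w, u' \<otimes>\<^bsub>T\<^esub> v)) \<in> ?G" if w: "w \<in> carrier S" for w
        proof -
          have "((w,u) \<otimes>\<^bsub>?P\<^esub> (\<one>\<^bsub>S\<^esub>,v), (w,u') \<otimes>\<^bsub>?P\<^esub> (\<one>\<^bsub>S\<^esub>,v)) \<in> ?G"
            using rc_compat[OF Grc G[OF w], of "(\<one>\<^bsub>S\<^esub>,v)"] v oneS by simp
          then show ?thesis using w by (simp add: monoid.r_one[OF S])
        qed
        then show "(u \<otimes>\<^bsub>T\<^esub> v, u' \<otimes>\<^bsub>T\<^esub> v) \<in> \<sigma>2" unfolding \<sigma>2_def using u v by (simp add: monoid.m_closed[OF T])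
      qed
      have "H2 \<subseteq> \<sigma>2"
      proof
        fix y assume y: "y \<in> H2"
        then obtain u u' where uu: "y = (u,u')" by (cases y)
        then have u: "u \<in> carrier T" "u' \<in> carrier T" using y H2(2) by auto
        have g: "((\<one>\<^bsub>S\<^esub>,u),(\<one>\<^bsub>S\<^esub>,u')) \<in> ?G" using HG y uu unfolding H_def by force
        have "((w,u),(w,u')) \<in> ?G" if w: "w \<in> carrier S" for w
        proof -
          have "((\<one>\<^bsub>S\<^esub>,u) \<otimes>\<^bsub>?P\<^esub> (w,\<one>\<^bsub>T\<^esub>), (\<one>\<^bsub>S\<^esub>,u') \<otimes>\<^bsub>?P\<^esub> (w,\<one>\<^bsub>T\<^esub>)) \<in> ?G"
            using rc_compat[OF Grc g, of "(w,\<one>\<^bsub>T\<^esub>)"] w oneT by simp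
          then show ?thesis using w u by (simp add: monoid.r_one[OF T] monoid.l_one[OF S])
        qed
        then show "y \<in> \<sigma>2" unfolding \<sigma>2_def using uu u by auto
      qed
      then have "ann T b \<subseteq> \<sigma>2" unfolding H2(3) by (rule gen_least[OF \<sigma>2rc])
      then have g2: "((s',t),(s',t')) \<in> ?G" using A2 cs unfolding \<sigma>2_def by auto
      show "h \<in> ?G" unfolding hh by (rule rc_trans[OF Grc g1 g2])
    qed
  qed
  show "\<exists>H. finite H \<and> H \<subseteq> carrier ?P \<times> carrier ?P \<and> ann ?P p = gen_right_congruence ?P (carrier ?P) ?mu H"
    unfolding ab using Hfin HP eq by blast
qed

lemma FRE_fst:
  fixes S :: "'a monoid" and T :: "'b monoid"
  assumes S: "monoid S" and T: "monoid T" and F: "FREp (S \<times>\<times> T)"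
  shows "FREp S"
  unfolding FREp_def
proof (intro ballI)
  let ?P = "S \<times>\<times> T" and ?mu = "\<lambda>x s. x \<otimes>\<^bsub>S \<times>\<times> T\<^esub> s" and ?muM = "\<lambda>x s. x \<otimes>\<^bsub>S\<^esub> s"
  have PM: "monoid ?P" by (rule DirProd_monoid[OF S T])
  have one: "\<one>\<^bsub>T\<^esub> \<in> carrier T" using T by (simp add: monoid.one_closed)
  fix a assume a: "a \<in> carrier S"
  have pc: "(a, \<one>\<^bsub>T\<^esub>) \<in> carrier ?P" using a one by simp
  obtain H where H: "finite H" "H \<subseteq> carrier ?P \<times> carrier ?P" "ann ?P (a, \<one>\<^bsub>T\<^esub>) = gen_right_congruence ?P (carrier ?P) ?mu H"
    using FREpD[OF F pc] by blast
  define H' where "H' = (\<lambda>(p,q). (fst p, fst q)) ` H"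
  have H'fin: "finite H'" unfolding H'_def using H(1) by simp
  have H'c: "H' \<subseteq> carrier S \<times> carrier S"
  proof
    fix h assume "h \<in> H'"
    then obtain p q where "(p,q) \<in> H" "h = (fst p, fst q)" unfolding H'_def by auto
    then show "h \<in> carrier S \<times> carrier S" using H(2) by auto
  qed
  let ?G = "gen_right_congruence S (carrier S) ?muM H'"
  have Grc: "right_congruence S (carrier S) ?muM ?G" by (rule gen_rc[OF mult_closed_all[OF S] H'c])
  have HA: "H \<subseteq> ann ?P (a, \<one>\<^bsub>T\<^esub>)" unfolding H(3) by (rule gen_sub)
  have "ann S a = ?G"
  proof
    show "?G \<subseteq> ann S a"
    proof (rule gen_least[OF ann_rc[OF S a]])
      show "H' \<subseteq> ann S a"
      proof
        fix h assume "h \<in> H'"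
        then obtain p q where pq: "(p,q) \<in> H" "h = (fst p, fst q)" unfolding H'_def by auto
        obtain p1 p2 q1 q2 where pp: "p = (p1,p2)" "q = (q1,q2)" by (cases p, cases q)
        have "(p,q) \<in> ann ?P (a, \<one>\<^bsub>T\<^esub>)" using pq(1) HA by blast
        then show "h \<in> ann S a" using pq(2) unfolding pp ann_prod by simp
      qed
    qed
  next
    show "ann S a \<subseteq> ?G"
    proof
      fix h assume h: "h \<in> ann S a"
      obtain s s' where ss: "h = (s,s')" by (cases h)
      have "(\<one>\<^bsub>T\<^esub>, \<one>\<^bsub>T\<^esub>) \<in> ann T \<one>\<^bsub>T\<^esub>" by (rule ann_refl[OF T one one])
      then have k: "((s, \<one>\<^bsub>T\<^esub>), (s', \<one>\<^bsub>T\<^esub>)) \<in> ann ?P (a, \<one>\<^bsub>T\<^esub>)" using h unfolding ss ann_prod by simp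
      define R where "R = {(p,q). p \<in> carrier ?P \<and> q \<in> carrier ?P \<and> (fst p, fst q) \<in> ?G}"
      have Rrc: "right_congruence ?P (carrier ?P) ?mu R"
      proof (rule rc_intro)
        show "R \<subseteq> carrier ?P \<times> carrier ?P" unfolding R_def by auto
      next
        fix p assume "p \<in> carrier ?P" then show "(p,p) \<in> R" unfolding R_def using rc_refl[OF Grc] by auto
      next
        fix p q assume "(p,q) \<in> R" then show "(q,p) \<in> R" unfolding R_def using rc_sym[OF Grc] by blast
      next
        fix p q r assume "(p,q) \<in> R" "(q,r) \<in> R" then show "(p,r) \<in> R" unfolding R_def using rc_trans[OF Grc] by blast
      next
        fix p q u assume pq: "(p,q) \<in> R" and u: "u \<in> carrier ?P"
        then have pc: "p \<in> carrier ?P" and qc: "q \<in> carrier ?P" and G: "(fst p, fst q) \<in> ?G" unfolding R_def by auto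
        have "(fst p \<otimes>\<^bsub>S\<^esub> fst u, fst q \<otimes>\<^bsub>S\<^esub> fst u) \<in> ?G"
          using rc_compat[OF Grc G, of "fst u"] u by auto
        moreover have "p \<otimes>\<^bsub>?P\<^esub> u \<in> carrier ?P" "q \<otimes>\<^bsub>?P\<^esub> u \<in> carrier ?P"
          by (rule monoid.m_closed[OF PM pc u], rule monoid.m_closed[OF PM qc u])
        ultimately show "(p \<otimes>\<^bsub>?P\<^esub> u, q \<otimes>\<^bsub>?P\<^esub> u) \<in> R" unfolding R_def by (simp add: mult_DirProd')
      qed
      have HR: "H \<subseteq> R"
      proof
        fix y assume y: "y \<in> H"
        then obtain p q where pq: "y = (p,q)" by (cases y)
        have "(fst p, fst q) \<in> H'" unfolding H'_def using y pq by force
        then have "(fst p, fst q) \<in> ?G" using gen_sub[of H'] by blast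
        then show "y \<in> R" using y pq H(2) unfolding R_def by auto
      qed
      have "((s, \<one>\<^bsub>T\<^esub>), (s', \<one>\<^bsub>T\<^esub>)) \<in> R" using k gen_least[OF Rrc HR] H(3) by auto
      then show "h \<in> ?G" unfolding R_def ss by simp
    qed
  qed
  then show "\<exists>H. finite H \<and> H \<subseteq> carrier S \<times> carrier S \<and> ann S a = gen_right_congruence S (carrier S) ?muM H"
    using H'fin H'c by blast
qed

lemma FRE_snd:
  fixes S :: "'a monoid" and T :: "'b monoid"
  assumes S: "monoid S" and T: "monoid T" and F: "FREp (S \<times>\<times> T)"
  shows "FREp T"
  unfolding FREp_def
proof (intro ballI)
  let ?P = "S \<times>\<times> T" and ?mu = "\<lambda>x s. x \<otimes>\<^bsub>S \<times>\<times> T\<^esub> s" and ?muM = "\<lambda>x s. x \<otimes>\<^bsub>T\<^esub> s"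
  have PM: "monoid ?P" by (rule DirProd_monoid[OF S T])
  have one: "\<one>\<^bsub>S\<^esub> \<in> carrier S" using S by (simp add: monoid.one_closed)
  fix a assume a: "a \<in> carrier T"
  have pc: "(\<one>\<^bsub>S\<^esub>, a) \<in> carrier ?P" using a one by simp
  obtain H where H: "finite H" "H \<subseteq> carrier ?P \<times> carrier ?P" "ann ?P (\<one>\<^bsub>S\<^esub>, a) = gen_right_congruence ?P (carrier ?P) ?mu H"
    using FREpD[OF F pc] by blast
  define H' where "H' = (\<lambda>(p,q). (snd p, snd q)) ` H"
  have H'fin: "finite H'" unfolding H'_def using H(1) by simp
  have H'c: "H' \<subseteq> carrier T \<times> carrier T"
  proof
    fix h assume "h \<in> H'"
    then obtain p q where "(p,q) \<in> H" "h = (snd p, snd q)" unfolding H'_def by auto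
    then show "h \<in> carrier T \<times> carrier T" using H(2) by auto
  qed
  let ?G = "gen_right_congruence T (carrier T) ?muM H'"
  have Grc: "right_congruence T (carrier T) ?muM ?G" by (rule gen_rc[OF mult_closed_all[OF T] H'c])
  have HA: "H \<subseteq> ann ?P (\<one>\<^bsub>S\<^esub>, a)" unfolding H(3) by (rule gen_sub)
  have "ann T a = ?G"
  proof
    show "?G \<subseteq> ann T a"
    proof (rule gen_least[OF ann_rc[OF T a]])
      show "H' \<subseteq> ann T a"
      proof
        fix h assume "h \<in> H'"
        then obtain p q where pq: "(p,q) \<in> H" "h = (snd p, snd q)" unfolding H'_def by auto
        obtain p1 p2 q1 q2 where pp: "p = (p1,p2)" "q = (q1,q2)" by (cases p, cases q)
        have "(p,q) \<in> ann ?P (\<one>\<^bsub>S\<^esub>, a)" using pq(1) HA by blast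
        then show "h \<in> ann T a" using pq(2) unfolding pp ann_prod by simp
      qed
    qed
  next
    show "ann T a \<subseteq> ?G"
    proof
      fix h assume h: "h \<in> ann T a"
      obtain s s' where ss: "h = (s,s')" by (cases h)
      have "(\<one>\<^bsub>S\<^esub>, \<one>\<^bsub>S\<^esub>) \<in> ann S \<one>\<^bsub>S\<^esub>" by (rule ann_refl[OF S one one])
      then have k: "((\<one>\<^bsub>S\<^esub>, s), (\<one>\<^bsub>S\<^esub>, s')) \<in> ann ?P (\<one>\<^bsub>S\<^esub>, a)" using h unfolding ss ann_prod by simp
      define R where "R = {(p,q). p \<in> carrier ?P \<and> q \<in> carrier ?P \<and> (snd p, snd q) \<in> ?G}"
      have Rrc: "right_congruence ?P (carrier ?P) ?mu R"
      proof (rule rc_intro)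
        show "R \<subseteq> carrier ?P \<times> carrier ?P" unfolding R_def by auto
      next
        fix p assume "p \<in> carrier ?P" then show "(p,p) \<in> R" unfolding R_def using rc_refl[OF Grc] by auto
      next
        fix p q assume "(p,q) \<in> R" then show "(q,p) \<in> R" unfolding R_def using rc_sym[OF Grc] by blast
      next
        fix p q r assume "(p,q) \<in> R" "(q,r) \<in> R" then show "(p,r) \<in> R" unfolding R_def using rc_trans[OF Grc] by blast
      next
        fix p q u assume pq: "(p,q) \<in> R" and u: "u \<in> carrier ?P"
        then have pc: "p \<in> carrier ?P" and qc: "q \<in> carrier ?P" and G: "(snd p, snd q) \<in> ?G" unfolding R_def by auto
        have "(snd p \<otimes>\<^bsub>T\<^esub> snd u, snd q \<otimes>\<^bsub>T\<^esub> snd u) \<in> ?G"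
          using rc_compat[OF Grc G, of "snd u"] u by auto
        moreover have "p \<otimes>\<^bsub>?P\<^esub> u \<in> carrier ?P" "q \<otimes>\<^bsub>?P\<^esub> u \<in> carrier ?P"
          by (rule monoid.m_closed[OF PM pc u], rule monoid.m_closed[OF PM qc u])
        ultimately show "(p \<otimes>\<^bsub>?P\<^esub> u, q \<otimes>\<^bsub>?P\<^esub> u) \<in> R" unfolding R_def by (simp add: mult_DirProd')
      qed
      have HR: "H \<subseteq> R"
      proof
        fix y assume y: "y \<in> H"
        then obtain p q where pq: "y = (p,q)" by (cases y)
        have "(snd p, snd q) \<in> H'" unfolding H'_def using y pq by force
        then have "(snd p, snd q) \<in> ?G" using gen_sub[of H'] by blast
        then show "y \<in> R" using y pq H(2) unfolding R_def by auto
      qed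
      have "((\<one>\<^bsub>S\<^esub>, s), (\<one>\<^bsub>S\<^esub>, s')) \<in> R" using k gen_least[OF Rrc HR] H(3) by auto
      then show "h \<in> ?G" unfolding R_def ss by simp
    qed
  qed
  then show "\<exists>H. finite H \<and> H \<subseteq> carrier T \<times> carrier T \<and> ann T a = gen_right_congruence T (carrier T) ?muM H"
    using H'fin H'c by blast
qed

theorem mainTheorem1:
  fixes S :: "'a monoid" and T :: "'b monoid"
  assumes "monoid S" and "monoid T"
  shows "weakly_right_coherent (S \<times>\<times> T) \<longleftrightarrow> weakly_right_coherent S \<and> weakly_right_coherent T"
proof -
  have P: "monoid (S \<times>\<times> T)" by (rule DirProd_monoid[OF assms])
  show ?thesis
    unfolding wrc_iff_RF[OF P] wrc_iff_RF[OF assms(1)] wrc_iff_RF[OF assms(2)]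
    using RIH_prod RIH_fst[OF assms] RIH_snd[OF assms] FRE_prod[OF assms] FRE_fst[OF assms] FRE_snd[OF assms]
    by blast
qed

end
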